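(* Fix $a\in(0,1/2)$ and $b\in(0,1)$. There exist an absolute constant $C\in(0,1)$ and constants $K,c_1,c_2>0$ depending only on $a,b$ such that for every spread process with parameters $(G,r,T,a,b)$ and every $t\ge1$, $$\big(1-e^{-c_1t^{c_2}}\big)\frac{V_G(r,\lfloor bt-Kt^{1-C}\rfloor)}{V_G(r,t)}\ \le\ \mathbb{E}[\lambda_{G,r}(t)]\ \le\ \frac{V_G(r,\lfloor bt+Kt^{1-C}\rfloor)}{V_G(r,t)}+e^{-c_1t^{c_2}},$$ with the convention $V_G(r,\rho)=0$ for $\rho<0$.
   Context: Spread process. Fix $a,b\in[0,1]$. Let $G=(V,E)$ be a connected, locally finite, undirected graph (finite or countably infinite), $r\in V$ a root, and $T$ a BFS spanning tree of $G$ rooted at $r$ (i.e. $d_T(r,v)=d_G(r,v)$), oriented away from $r$, with parent $p(v)$ for $v\ne r$. The spread process with parameters $(G,r,T,a,b)$ is the random sequence $f_t:V\to\{+1,-1,\bot\}$: $f_t(r)=+1$ for all $t$; $f_0(v)=\bot$ for $v\ne r$; for $t\ge1$ and each $v\ne r$ independently: if $f_{t-1}(v)=\bot\ne f_{t-1}(p(v))$ then $f_t(v)=f_{t-1}(p(v))$ w.p. $1-a$ and $-f_{t-1}(p(v))$ w.p. $a$; if $f_{t-1}(v)\ne\bot$ then $f_t(v)=f_{t-1}(p(v))$ w.p. $b$ and $f_{t-1}(v)$ w.p. $1-b$; if $f_{t-1}(v)=f_{t-1}(p(v))=\bot$ then $f_t(v)=\bot$. Volume: $B_{\rho,G}(v)=\{u:d_G(v,u)\le\rho\}$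 and $V_G(v,\rho)=|B_{\rho,G}(v)|$. Note $\{v:f_t(v)\ne\bot\}=B_{t,G}(r)$. Opinion bias: $\lambda_{G,r}(t)=\dfrac{|\{v:f_t(v)=+1\}|-|\{v:f_t(v)=-1\}|}{|\{v:f_t(v)\ne\bot\}|}$. *)

theory Defs
  imports "HOL-Probability.Probability"
begin

text \<open>Opinions: Pos = +1, Neg = -1, Und = undecided (bottom).\<close>
datatype opinion = Pos | Neg | Und

fun flip :: "opinion \<Rightarrow> opinion" where
  "flip Pos = Neg" | "flip Neg = Pos" | "flip Und = Und"

definition undirected_graph :: "nat set \<Rightarrow> (nat \<times> nat) set \<Rightarrow> bool" where
  "undirected_graph V E \<longleftrightarrow> E \<subseteq> V \<times> V \<and> sym E"

definition connected_graph :: "nat set \<Rightarrow> (nat \<times> nat) set \<Rightarrow> bool" where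
  "connected_graph V E \<longleftrightarrow> V \<noteq> {} \<and> (\<forall>u\<in>V. \<forall>w\<in>V. (u, w) \<in> E\<^sup>*)"

definition locally_finite :: "nat set \<Rightarrow> (nat \<times> nat) set \<Rightarrow> bool" where
  "locally_finite V E \<longleftrightarrow> (\<forall>v\<in>V. finite {u. (v, u) \<in> E})"

definition gdist :: "(nat \<times> nat) set \<Rightarrow> nat \<Rightarrow> nat \<Rightarrow> nat" where
  "gdist E u v = (LEAST n. (u, v) \<in> E ^^ n)"

definition gball :: "nat set \<Rightarrow> (nat \<times> nat) set \<Rightarrow> nat \<Rightarrow> nat \<Rightarrow> nat set" where
  "gball V E v \<rho> = {u \<in> V. gdist E v u \<le> \<rho>}"

definition gvol :: "nat set \<Rightarrow> (nat \<times> nat) set \<Rightarrow> nat \<Rightarrow> int \<Rightarrow> nat" where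
  "gvol V E v \<rho> = (if \<rho> < 0 then 0 else card (gball V E v (nat \<rho>)))"

text \<open>A BFS spanning tree rooted at r, given by its parent map p:
  every non-root vertex is joined in G to its parent, which is one step closer to r.\<close>
definition bfs_tree :: "nat set \<Rightarrow> (nat \<times> nat) set \<Rightarrow> nat \<Rightarrow> (nat \<Rightarrow> nat) \<Rightarrow> bool" where
  "bfs_tree V E r p \<longleftrightarrow> r \<in> V \<and>
     (\<forall>v \<in> V - {r}. p v \<in> V \<and> (p v, v) \<in> E \<and> gdist E r (p v) + 1 = gdist E r v)"

definition spread_step :: "nat set \<Rightarrow> (nat \<Rightarrow> nat) \<Rightarrow> nat \<Rightarrow> real \<Rightarrow> real \<Rightarrow>
    (nat \<Rightarrow> opinion) \<Rightarrow> (nat \<Rightarrow> opinion) pmf" where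
  "spread_step V p r a b f =
     Pi_pmf {v \<in> V. v = r \<or> f v \<noteq> Und \<or> f (p v) \<noteq> Und} Und
       (\<lambda>v. if v = r then return_pmf Pos
            else if f v = Und then
              (if f (p v) = Und then return_pmf Und
               else map_pmf (\<lambda>x. if x then flip (f (p v)) else f (p v)) (bernoulli_pmf a))
            else map_pmf (\<lambda>x. if x then f (p v) else f v) (bernoulli_pmf b))"

fun spread :: "nat set \<Rightarrow> (nat \<Rightarrow> nat) \<Rightarrow> nat \<Rightarrow> real \<Rightarrow> real \<Rightarrow> nat \<Rightarrow> (nat \<Rightarrow> opinion) pmf" where
  "spread V p r a b 0 = return_pmf ((\<lambda>_. Und)(r := Pos))"
| "spread V p r a b (Suc t) = bind_pmf (spread V p r a b t) (spread_step V p r a b)"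

definition bias :: "(nat \<Rightarrow> opinion) \<Rightarrow> real" where
  "bias f = (real (card {v. f v = Pos}) - real (card {v. f v = Neg})) / real (card {v. f v \<noteq> Und})"

end

theory Submission
  imports Defs
begin


lemma gdist_rr: "gdist E r r = 0"
  unfolding gdist_def by (rule Least_eq_0) simp

lemma r_in_ball: "bfs_tree V E r p \<Longrightarrow> r \<in> gball V E r n"
  by (simp add: gball_def bfs_tree_def gdist_rr)

lemma ball_fin:
  assumes bfs: "bfs_tree V E r p" and lf: "locally_finite V E"
  shows "finite (gball V E r n)"
proof (induction n)
  case 0
  have "gball V E r 0 \<subseteq> {r}"
  proof
    fix v assume v: "v \<in> gball V E r 0"
    show "v \<in> {r}"
    proof (rule ccontr)
      assume "v \<notin> {r}"
      with v bfs have "gdist E r (p v) + 1 = gdist E r v" "gdist E r v = 0"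
        by (auto simp: bfs_tree_def gball_def)
      thus False by simp
    qed
  qed
  then show ?case using finite_subset by blast
next
  case (Suc n)
  have "gball V E r (Suc n) \<subseteq> {r} \<union> (\<Union>u\<in>gball V E r n. {w. (u, w) \<in> E})"
  proof
    fix v assume v: "v \<in> gball V E r (Suc n)"
    show "v \<in> {r} \<union> (\<Union>u\<in>gball V E r n. {w. (u, w) \<in> E})"
    proof (cases "v = r")
      case False
      with v bfs have "p v \<in> V" "(p v, v) \<in> E" "gdist E r (p v) + 1 = gdist E r v" "gdist E r v \<le> Suc n"
        by (auto simp: bfs_tree_def gball_def)
      then have "p v \<in> gball V E r n" by (simp add: gball_def)
      with \<open>(p v, v) \<in> E\<close> show ?thesis by blast
    qed simp
  qed
  moreover have "finite (\<Union>u\<in>gball V E r n. {w. (u, w) \<in> E})"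
    using Suc lf by (auto simp: locally_finite_def gball_def)
  ultimately show ?case using finite_subset by blast
qed

lemma ball_mono: "m \<le> n \<Longrightarrow> gball V E r m \<subseteq> gball V E r n"
  by (auto simp: gball_def)

lemma flip_Und: "flip x = Und \<longleftrightarrow> x = Und"
  by (cases x) auto

lemma step_set:
  assumes bfs: "bfs_tree V E r p" and lf: "locally_finite V E"
    and g: "\<forall>v. g v \<noteq> Und \<longleftrightarrow> v \<in> gball V E r t"
  shows "{v \<in> V. v = r \<or> g v \<noteq> Und \<or> g (p v) \<noteq> Und} = gball V E r (Suc t)"
proof -
  have key: "v \<in> gball V E r (Suc t) \<longleftrightarrow> (v = r \<or> g v \<noteq> Und \<or> g (p v) \<noteq> Und)" if vV: "v \<in> V" for v
  proof (cases "v = r")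
    case True
    then show ?thesis using bfs by (simp add: r_in_ball)
  next
    case False
    with vV bfs have pV: "p v \<in> V" and pd: "gdist E r (p v) + 1 = gdist E r v"
      by (auto simp: bfs_tree_def)
    have g1: "g v \<noteq> Und \<longleftrightarrow> gdist E r v \<le> t"
      using g vV unfolding gball_def by blast
    have g2: "g (p v) \<noteq> Und \<longleftrightarrow> gdist E r (p v) \<le> t"
      using g pV unfolding gball_def by blast
    have g3: "v \<in> gball V E r (Suc t) \<longleftrightarrow> gdist E r v \<le> Suc t"
      using vV unfolding gball_def by blast
    show ?thesis unfolding g1 g2 g3 using pd False by linarith
  qed
  show ?thesis
  proof (intro set_eqI iffI)
    fix v assume "v \<in> {v \<in> V. v = r \<or> g v \<noteq> Und \<or> g (p v) \<noteq> Und}"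
    then show "v \<in> gball V E r (Suc t)" using key by blast
  next
    fix v assume v: "v \<in> gball V E r (Suc t)"
    then have "v \<in> V" unfolding gball_def by blast
    then show "v \<in> {v \<in> V. v = r \<or> g v \<noteq> Und \<or> g (p v) \<noteq> Und}" using key v by blast
  qed
qed

lemma support:
  assumes bfs: "bfs_tree V E r p" and lf: "locally_finite V E"
  shows "f \<in> set_pmf (spread V p r a b t) \<Longrightarrow> \<forall>v. f v \<noteq> Und \<longleftrightarrow> v \<in> gball V E r t"
proof (induction t arbitrary: f)
  case 0
  have "gball V E r 0 = {r}"
  proof -
    have "gball V E r 0 \<subseteq> {r}"
    proof
      fix v assume v: "v \<in> gball V E r 0"
      show "v \<in> {r}"
      proof (rule ccontr)
        assume "v \<notin> {r}"
        with v bfs have "gdist E r (p v) + 1 = gdist E r v" "gdist E r v = 0"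
          by (auto simp: bfs_tree_def gball_def)
        thus False by simp
      qed
    qed
    then show ?thesis using r_in_ball[OF bfs] by blast
  qed
  with 0 show ?case by auto
next
  case (Suc t)
  from Suc.prems obtain g where g: "g \<in> set_pmf (spread V p r a b t)"
    and f: "f \<in> set_pmf (spread_step V p r a b g)" by auto
  have gi: "\<forall>v. g v \<noteq> Und \<longleftrightarrow> v \<in> gball V E r t" using Suc.IH g by blast
  note A = step_set[OF bfs lf gi]
  have fin: "finite (gball V E r (Suc t))" by (rule ball_fin[OF bfs lf])
  define q where "q = (\<lambda>v. if v = r then return_pmf Pos
            else if g v = Und then
              (if g (p v) = Und then return_pmf Und
               else map_pmf (\<lambda>x. if x then flip (g (p v)) else g (p v)) (bernoulli_pmf a))
            else map_pmf (\<lambda>x. if x then g (p v) else g v) (bernoulli_pmf b))"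
  have "f \<in> set_pmf (Pi_pmf (gball V E r (Suc t)) Und q)"
    using f unfolding spread_step_def A q_def .
  then have f': "f \<in> PiE_dflt (gball V E r (Suc t)) Und (set_pmf \<circ> q)"
    unfolding set_Pi_pmf[OF fin] .
  then have f'': "\<And>x. (x \<in> gball V E r (Suc t) \<longrightarrow> f x \<in> set_pmf (q x)) \<and> (x \<notin> gball V E r (Suc t) \<longrightarrow> f x = Und)"
    unfolding PiE_dflt_def by simp
  show ?case
  proof
    fix v
    show "f v \<noteq> Und \<longleftrightarrow> v \<in> gball V E r (Suc t)"
    proof (cases "v \<in> gball V E r (Suc t)")
      case False
      then show ?thesis using f''[of v] by simp
    next
      case True
      have fv: "f v \<in> set_pmf (q v)" using f''[of v] True by simp
      have vV: "v \<in> V" using True by (simp add: gball_def)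
      have "f v \<noteq> Und"
      proof (cases "v = r")
        case True then show ?thesis using fv by (simp add: q_def)
      next
        case nr: False
        with vV bfs have pv: "gdist E r (p v) + 1 = gdist E r v" "p v \<in> V"
          by (auto simp: bfs_tree_def)
        show ?thesis
        proof (cases "g v = Und")
          case True
          then have "g (p v) \<noteq> Und" using A \<open>v \<in> gball V E r (Suc t)\<close> nr by blast
          then show ?thesis using fv nr True by (auto simp: flip_Und q_def)
        next
          case False
          then have "v \<in> gball V E r t" using gi by blast
          then have "p v \<in> gball V E r t" using pv by (auto simp: gball_def)
          then have "g (p v) \<noteq> Und" using gi by blast
          then show ?thesis using fv nr False by (auto simp: q_def)
        qed
      qed
      then show ?thesis using True by simp
    qed
  qed
qed



fun val :: "opinion \<Rightarrow> real" where
  "val Pos = 1" | "val Neg = -1" | "val Und = 0"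

lemma val_bnd: "\<bar>val x\<bar> \<le> 1" by (cases x) auto
lemma val_flip: "val (flip x) = - val x" by (cases x) auto

lemma int_bnd: "(\<And>x. \<bar>h x\<bar> \<le> B) \<Longrightarrow> integrable (measure_pmf M) (h :: _ \<Rightarrow> real)"
  by (intro measure_pmf.integrable_const_bound[where B=B]) auto

lemma exp_bind:
  fixes h :: "'b \<Rightarrow> real"
  assumes "\<And>y. \<bar>h y\<bar> \<le> B"
  shows "measure_pmf.expectation (bind_pmf p q) h = measure_pmf.expectation p (\<lambda>x. measure_pmf.expectation (q x) h)"
  using measurable_measure_pmf[of q] assms unfolding measure_pmf_bind
  by (subst integral_bind[where K="count_space UNIV" and B=B and B'=1]) (auto intro: measure_pmf.finite_measure)

definition xx where "xx V p r a b t v = measure_pmf.expectation (spread V p r a b t) (\<lambda>f. val (f v))"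

lemma inner:
  assumes bfs: "bfs_tree V E r p" and lf: "locally_finite V E"
    and g: "\<forall>v. g v \<noteq> Und \<longleftrightarrow> v \<in> gball V E r t"
    and ab: "0 \<le> a" "a \<le> 1" "0 \<le> b" "b \<le> 1" and vV: "v \<in> V"
  shows "measure_pmf.expectation (spread_step V p r a b g) (\<lambda>f. val (f v)) =
    (if v = r then 1 else if v \<in> gball V E r t then b * val (g (p v)) + (1 - b) * val (g v)
     else (1 - 2 * a) * val (g (p v)))"
proof -
  note A = step_set[OF bfs lf g]
  have fin: "finite (gball V E r (Suc t))" by (rule ball_fin[OF bfs lf])
  have "measure_pmf.expectation (spread_step V p r a b g) (\<lambda>f. val (f v)) =
      measure_pmf.expectation (map_pmf (\<lambda>f. f v) (spread_step V p r a b g)) val"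
    by simp
  also have "map_pmf (\<lambda>f. f v) (spread_step V p r a b g) = (if v \<in> gball V E r (Suc t) then
       (if v = r then return_pmf Pos
            else if g v = Und then
              (if g (p v) = Und then return_pmf Und
               else map_pmf (\<lambda>x. if x then flip (g (p v)) else g (p v)) (bernoulli_pmf a))
            else map_pmf (\<lambda>x. if x then g (p v) else g v) (bernoulli_pmf b)) else return_pmf Und)"
    unfolding spread_step_def A by (rule Pi_pmf_component[OF fin])
  finally have e: "measure_pmf.expectation (spread_step V p r a b g) (\<lambda>f. val (f v)) = 
     measure_pmf.expectation (if v \<in> gball V E r (Suc t) then
       (if v = r then return_pmf Pos
            else if g v = Und then
              (if g (p v) = Und then return_pmf Und
               else map_pmf (\<lambda>x. if x then flip (g (p v)) else g (p v)) (bernoulli_pmf a))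
            else map_pmf (\<lambda>x. if x then g (p v) else g v) (bernoulli_pmf b)) else return_pmf Und) val" .
  show ?thesis
  proof (cases "v = r")
    case True
    then show ?thesis using e r_in_ball[OF bfs] by simp
  next
    case nr: False
    with vV bfs have pv: "gdist E r (p v) + 1 = gdist E r v" "p v \<in> V"
      by (auto simp: bfs_tree_def)
    show ?thesis
    proof (cases "v \<in> gball V E r t")
      case True
      then have "v \<in> gball V E r (Suc t)" using ball_mono[of t "Suc t"] by auto
      moreover have "g v \<noteq> Und" using True g by blast
      ultimately show ?thesis using e nr True ab by simp
    next
      case False
      then have gv: "g v = Und" using g by blast
      show ?thesis
      proof (cases "g (p v) = Und")
        case True
        then show ?thesis using e nr False gv by simp
      next
        case False2: False
        then have "v \<in> gball V E r (Suc t)" using A vV by blast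
        then show ?thesis using e nr False gv False2 ab by (simp add: val_flip algebra_simps)
      qed
    qed
  qed
qed

lemma xx_out:
  assumes bfs: "bfs_tree V E r p" and lf: "locally_finite V E" and v: "v \<notin> gball V E r t"
  shows "xx V p r a b t v = 0"
proof -
  have "xx V p r a b t v = measure_pmf.expectation (spread V p r a b t) (\<lambda>f. 0)"
    unfolding xx_def
  proof (intro integral_cong_AE)
    show "AE f in measure_pmf (spread V p r a b t). val (f v) = 0"
    proof (rule AE_pmfI)
      fix f assume "f \<in> set_pmf (spread V p r a b t)"
      then have "f v = Und" using support[OF bfs lf] v by blast
      then show "val (f v) = 0" by simp
    qed
  qed auto
  then show ?thesis by simp
qed

lemma xx_0: "xx V p r a b 0 v = (if v = r then 1 else 0)"
  by (simp add: xx_def)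

lemma xx_Suc:
  assumes bfs: "bfs_tree V E r p" and lf: "locally_finite V E"
    and ab: "0 \<le> a" "a \<le> 1" "0 \<le> b" "b \<le> 1" and vV: "v \<in> V"
  shows "xx V p r a b (Suc t) v = (if v = r then 1 else if v \<in> gball V E r t
     then b * xx V p r a b t (p v) + (1 - b) * xx V p r a b t v
     else (1 - 2 * a) * xx V p r a b t (p v))"
proof -
  have "xx V p r a b (Suc t) v = measure_pmf.expectation (spread V p r a b t)
     (\<lambda>g. measure_pmf.expectation (spread_step V p r a b g) (\<lambda>f. val (f v)))"
    unfolding xx_def by (simp add: exp_bind[where B=1] val_bnd)
  also have "\<dots> = measure_pmf.expectation (spread V p r a b t)
     (\<lambda>g. (if v = r then 1 else if v \<in> gball V E r t then b * val (g (p v)) + (1 - b) * val (g v)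
     else (1 - 2 * a) * val (g (p v))))"
  proof (intro integral_cong_AE)
    show "AE g in measure_pmf (spread V p r a b t). measure_pmf.expectation (spread_step V p r a b g) (\<lambda>f. val (f v)) = (if v = r then 1 else if v \<in> gball V E r t then b * val (g (p v)) + (1 - b) * val (g v)
     else (1 - 2 * a) * val (g (p v)))"
    proof (rule AE_pmfI)
      fix g assume "g \<in> set_pmf (spread V p r a b t)"
      then have "\<forall>v. g v \<noteq> Und \<longleftrightarrow> v \<in> gball V E r t" using support[OF bfs lf] by blast
      then show "measure_pmf.expectation (spread_step V p r a b g) (\<lambda>f. val (f v)) = (if v = r then 1 else if v \<in> gball V E r t then b * val (g (p v)) + (1 - b) * val (g v)
     else (1 - 2 * a) * val (g (p v)))" by (rule inner[OF bfs lf _ ab vV])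
    qed
  qed auto
  also have "\<dots> = (if v = r then 1 else if v \<in> gball V E r t
     then b * xx V p r a b t (p v) + (1 - b) * xx V p r a b t v
     else (1 - 2 * a) * xx V p r a b t (p v))"
    unfolding xx_def
    by (auto simp: int_bnd[OF val_bnd] intro!: integral_add)
  finally show ?thesis .
qed



lemma pv_facts:
  assumes bfs: "bfs_tree V E r p" and "v \<in> V" "v \<noteq> r"
  shows "p v \<in> V" "gdist E r v = gdist E r (p v) + 1"
  using assms by (auto simp: bfs_tree_def)

lemma L1:
  assumes bfs: "bfs_tree V E r p" and lf: "locally_finite V E"
    and ab: "0 \<le> a" "a \<le> 1/2" "0 \<le> b" "b \<le> 1"
  shows "\<forall>v\<in>V. 0 \<le> xx V p r a b t v \<and> xx V p r a b t v \<le> 1"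
proof (induction t)
  case 0 then show ?case by (simp add: xx_0)
next
  case (Suc t)
  show ?case
  proof
    fix v assume vV: "v \<in> V"
    show "0 \<le> xx V p r a b (Suc t) v \<and> xx V p r a b (Suc t) v \<le> 1"
    proof (cases "v = r")
      case True then show ?thesis using xx_Suc[OF bfs lf _ _ _ _ vV] ab by simp
    next
      case False
      note pv = pv_facts[OF bfs vV False]
      have h1: "0 \<le> xx V p r a b t (p v)" "xx V p r a b t (p v) \<le> 1"
        "0 \<le> xx V p r a b t v" "xx V p r a b t v \<le> 1" using Suc pv vV by auto
      have "0 \<le> b * xx V p r a b t (p v) + (1 - b) * xx V p r a b t v" using h1 ab by simp
      moreover have "b * xx V p r a b t (p v) + (1 - b) * xx V p r a b t v \<le> b * 1 + (1 - b) * 1"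
        using h1 ab by (intro add_mono mult_left_mono) auto
      moreover have "0 \<le> (1 - 2 * a) * xx V p r a b t (p v)" using h1 ab by simp
      moreover have "(1 - 2 * a) * xx V p r a b t (p v) \<le> 1 * 1"
        using h1 ab by (intro mult_mono) auto
      ultimately show ?thesis using xx_Suc[OF bfs lf _ _ _ _ vV, of a b t] ab False by auto
    qed
  qed
qed

lemma L2:
  assumes bfs: "bfs_tree V E r p" and lf: "locally_finite V E"
    and ab: "0 \<le> a" "a \<le> 1/2" "0 \<le> b" "b \<le> 1" and lam: "0 \<le> lam"
  defines "mu \<equiv> b * exp (- lam) + (1 - b)"
  shows "\<forall>v\<in>V. gdist E r v \<le> t \<longrightarrow> 1 - xx V p r a b t v \<le> exp (lam * gdist E r v) * mu ^ t"
proof (induction t)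
  case 0
  show ?case
  proof (intro ballI impI)
    fix v assume "v \<in> V" "gdist E r v \<le> 0"
    then have "v = r"
    proof -
      assume vV: "v \<in> V" and d0: "gdist E r v \<le> 0"
      show "v = r"
      proof (rule ccontr)
        assume "v \<noteq> r"
        then have "gdist E r v = gdist E r (p v) + 1" using pv_facts(2)[OF bfs vV] by blast
        then show False using d0 by simp
      qed
    qed
    then show "1 - xx V p r a b 0 v \<le> exp (lam * gdist E r v) * mu ^ 0" by (simp add: xx_0)
  qed
next
  case (Suc t)
  have mu0: "0 \<le> mu" using ab unfolding mu_def by simp
  have emu: "1 \<le> exp lam * mu"
  proof -
    have "exp lam * mu = b + (1 - b) * exp lam" unfolding mu_def by (simp add: algebra_simps exp_minus)
    moreover have "1 \<le> exp lam" using lam by simp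
    moreover have "(1 - b) * 1 \<le> (1 - b) * exp lam" using ab \<open>1 \<le> exp lam\<close> by (intro mult_left_mono) auto
    ultimately show ?thesis by simp
  qed
  show ?case
  proof (intro ballI impI)
    fix v assume vV: "v \<in> V" and dv: "gdist E r v \<le> Suc t"
    show "1 - xx V p r a b (Suc t) v \<le> exp (lam * gdist E r v) * mu ^ Suc t"
    proof (cases "v = r")
      case True then show ?thesis using xx_Suc[OF bfs lf _ _ _ _ vV, of a b t] ab mu0 by simp
    next
      case False
      note pv = pv_facts[OF bfs vV False]
      have h1: "0 \<le> xx V p r a b t (p v)" using L1[OF bfs lf ab, of t] pv by auto
      show ?thesis
      proof (cases "v \<in> gball V E r t")
        case True
        then have dt: "gdist E r v \<le> t" by (simp add: gball_def)
        have i1: "1 - xx V p r a b t (p v) \<le> exp (lam * gdist E r (p v)) * mu ^ t"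
          using Suc pv dt by auto
        have i2: "1 - xx V p r a b t v \<le> exp (lam * gdist E r v) * mu ^ t"
          using Suc vV dt by auto
        have "1 - xx V p r a b (Suc t) v = b * (1 - xx V p r a b t (p v)) + (1 - b) * (1 - xx V p r a b t v)"
          using xx_Suc[OF bfs lf _ _ _ _ vV, of a b t] ab False True by (simp add: algebra_simps)
        also have "\<dots> \<le> b * (exp (lam * gdist E r (p v)) * mu ^ t) + (1 - b) * (exp (lam * gdist E r v) * mu ^ t)"
          using i1 i2 ab by (intro add_mono mult_left_mono) auto
        also have "\<dots> = exp (lam * gdist E r v) * mu ^ Suc t"
          unfolding mu_def pv(2) by (simp add: algebra_simps exp_add exp_minus)
        finally show ?thesis .
      next
        case nb: False
        then have dt: "gdist E r v = Suc t" using dv vV by (simp add: gball_def)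
        have "1 - xx V p r a b (Suc t) v = 1 - (1 - 2 * a) * xx V p r a b t (p v)"
          using xx_Suc[OF bfs lf _ _ _ _ vV, of a b t] ab False nb by simp
        also have "\<dots> \<le> 1" using h1 ab by simp
        also have "1 \<le> (exp lam * mu) ^ Suc t" using emu by (rule one_le_power)
        also have "\<dots> = exp lam ^ Suc t * mu ^ Suc t" by (rule power_mult_distrib)
        also have "exp lam ^ Suc t = exp (lam * gdist E r v)"
        proof -
          have "exp lam ^ Suc t = exp (real (Suc t) * lam)" by (rule exp_of_nat_mult[symmetric])
          also have "\<dots> = exp (lam * gdist E r v)" unfolding dt by (simp only: mult.commute)
          finally show ?thesis .
        qed
        finally show ?thesis .
      qed
    qed
  qed
qed

lemma L3:
  assumes bfs: "bfs_tree V E r p" and lf: "locally_finite V E"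
    and ab: "0 \<le> a" "a \<le> 1/2" "0 \<le> b" "b \<le> 1" and lam: "0 \<le> lam"
    and cond: "(1 - 2 * a - b) * exp lam \<le> 1 - b"
  defines "nu \<equiv> b * exp lam + (1 - b)"
  shows "\<forall>v\<in>V. xx V p r a b t v \<le> exp (- lam * gdist E r v) * nu ^ t"
proof (induction t)
  case 0
  show ?case by (auto simp: xx_0 gdist_rr)
next
  case (Suc t)
  have nu1: "1 \<le> nu"
  proof -
    have "b * 1 \<le> b * exp lam" using ab lam by (intro mult_left_mono) auto
    then show ?thesis unfolding nu_def by simp
  qed
  show ?case
  proof (intro ballI)
    fix v assume vV: "v \<in> V"
    show "xx V p r a b (Suc t) v \<le> exp (- lam * gdist E r v) * nu ^ Suc t"
    proof (cases "v = r")
      case True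
      have "1 \<le> nu ^ Suc t" by (rule one_le_power[OF nu1])
      then show ?thesis using xx_Suc[OF bfs lf _ _ _ _ vV, of a b t] ab True
        by (simp add: gdist_rr del: power_Suc)
    next
      case False
      note pv = pv_facts[OF bfs vV False]
      have i1: "xx V p r a b t (p v) \<le> exp (- lam * gdist E r (p v)) * nu ^ t"
        using Suc pv by auto
      have e: "exp (- lam * real (gdist E r (p v))) = exp (- lam * real (gdist E r v)) * exp lam"
        unfolding pv(2) by (simp add: exp_add[symmetric] algebra_simps)
      show ?thesis
      proof (cases "v \<in> gball V E r t")
        case True
        have i2: "xx V p r a b t v \<le> exp (- lam * gdist E r v) * nu ^ t"
          using Suc vV by auto
        have "xx V p r a b (Suc t) v = b * xx V p r a b t (p v) + (1 - b) * xx V p r a b t v"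
          using xx_Suc[OF bfs lf _ _ _ _ vV, of a b t] ab False True by simp
        also have "\<dots> \<le> b * (exp (- lam * gdist E r (p v)) * nu ^ t) + (1 - b) * (exp (- lam * gdist E r v) * nu ^ t)"
          using i1 i2 ab by (intro add_mono mult_left_mono) auto
        also have "\<dots> = exp (- lam * gdist E r v) * nu ^ Suc t"
          unfolding e nu_def by (simp add: algebra_simps)
        finally show ?thesis .
      next
        case nb: False
        have "xx V p r a b (Suc t) v = (1 - 2 * a) * xx V p r a b t (p v)"
          using xx_Suc[OF bfs lf _ _ _ _ vV, of a b t] ab False nb by simp
        also have "\<dots> \<le> (1 - 2 * a) * (exp (- lam * gdist E r (p v)) * nu ^ t)"
          using i1 ab by (intro mult_left_mono) auto
        also have "\<dots> = exp (- lam * gdist E r v) * nu ^ t * ((1 - 2 * a) * exp lam)"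
          unfolding e by (simp add: algebra_simps)
        also have "\<dots> \<le> exp (- lam * gdist E r v) * nu ^ t * nu"
          using cond nu1 unfolding nu_def by (intro mult_left_mono) (auto simp: algebra_simps)
        also have "\<dots> = exp (- lam * gdist E r v) * nu ^ Suc t" by simp
        finally show ?thesis .
      qed
    qed
  qed
qed



lemma bias_eq:
  assumes fin: "finite B" and f: "\<forall>v. f v \<noteq> Und \<longleftrightarrow> v \<in> B"
  shows "bias f = (\<Sum>v\<in>B. val (f v)) / real (card B)"
proof -
  have s: "{v. f v \<noteq> Und} = B"
  proof (rule set_eqI)
    fix v show "v \<in> {v. f v \<noteq> Und} \<longleftrightarrow> v \<in> B" using spec[OF f, of v] by simp
  qed
  have P: "{v. f v = Pos} = {v\<in>B. f v = Pos}"
  proof (rule set_eqI)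
    fix v show "v \<in> {v. f v = Pos} \<longleftrightarrow> v \<in> {v\<in>B. f v = Pos}" using spec[OF f, of v] by (cases "f v") simp_all
  qed
  have N: "{v. f v = Neg} = {v\<in>B. f v = Neg}"
  proof (rule set_eqI)
    fix v show "v \<in> {v. f v = Neg} \<longleftrightarrow> v \<in> {v\<in>B. f v = Neg}" using spec[OF f, of v] by (cases "f v") simp_all
  qed
  have "(\<Sum>v\<in>B. val (f v)) = (\<Sum>v\<in>B. (if f v = Pos then 1 else 0) - (if f v = Neg then 1 else 0))"
  proof (rule sum.cong)
    fix v show "val (f v) = (if f v = Pos then 1 else 0) - (if f v = Neg then 1 else 0)"
      by (cases "f v") auto
  qed simp
  also have "\<dots> = (\<Sum>v\<in>B. (if f v = Pos then 1 else 0)) - (\<Sum>v\<in>B. (if f v = Neg then 1 else 0))"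
    by (rule sum_subtractf)
  also have "(\<Sum>v\<in>B. (if f v = Pos then 1 else 0)) = real (card {v\<in>B. f v = Pos})"
    using sum.inter_filter[OF fin, of "\<lambda>_. 1::real" "\<lambda>v. f v = Pos"] by simp
  also have "(\<Sum>v\<in>B. (if f v = Neg then 1 else 0)) = real (card {v\<in>B. f v = Neg})"
    using sum.inter_filter[OF fin, of "\<lambda>_. 1::real" "\<lambda>v. f v = Neg"] by simp
  finally have "(\<Sum>v\<in>B. val (f v)) = real (card {v\<in>B. f v = Pos}) - real (card {v\<in>B. f v = Neg})" .
  then show ?thesis unfolding bias_def s P N by (simp only:)
qed

lemma Ebias:
  assumes bfs: "bfs_tree V E r p" and lf: "locally_finite V E"
  shows "measure_pmf.expectation (spread V p r a b t) bias
     = (\<Sum>v\<in>gball V E r t. xx V p r a b t v) / real (card (gball V E r t))"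
proof -
  have fin: "finite (gball V E r t)" by (rule ball_fin[OF bfs lf])
  have "measure_pmf.expectation (spread V p r a b t) bias
      = measure_pmf.expectation (spread V p r a b t) (\<lambda>f. (\<Sum>v\<in>gball V E r t. val (f v)) / real (card (gball V E r t)))"
  proof (intro integral_cong_AE)
    show "AE f in measure_pmf (spread V p r a b t). bias f = (\<Sum>v\<in>gball V E r t. val (f v)) / real (card (gball V E r t))"
    proof (rule AE_pmfI)
      fix f assume "f \<in> set_pmf (spread V p r a b t)"
      then have "\<forall>v. f v \<noteq> Und \<longleftrightarrow> v \<in> gball V E r t" using support[OF bfs lf] by blast
      then show "bias f = (\<Sum>v\<in>gball V E r t. val (f v)) / real (card (gball V E r t))"
        by (rule bias_eq[OF fin])
    qed
  qed auto
  also have "\<dots> = (\<Sum>v\<in>gball V E r t. xx V p r a b t v) / real (card (gball V E r t))"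
    unfolding xx_def
    by (subst integral_divide_zero, subst Bochner_Integration.integral_sum) (auto intro: int_bnd[OF val_bnd])
  finally show ?thesis .
qed

lemma exp_neg_bound: "0 \<le> (x::real) \<Longrightarrow> exp (- x) \<le> 1 - x + x^2"
proof -
  assume x: "0 \<le> x"
  have "1 + x \<le> exp x" by simp
  have "exp (-x) = 1 / exp x" by (simp add: exp_minus field_simps)
  also have "\<dots> \<le> 1 / (1 + x)" using x by (intro divide_left_mono) auto
  also have "\<dots> \<le> 1 - x + x^2"
  proof -
    have eq: "(1 - x + x^2) * (1 + x) = 1 + x^3" by (simp add: power2_eq_square power3_eq_cube algebra_simps)
    have "0 \<le> x^3" using x by simp
    then have "1 \<le> (1 - x + x^2) * (1 + x)" unfolding eq by simp
    moreover have "0 < 1 + x" using x by simp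
    ultimately show ?thesis by (simp add: divide_le_eq)
  qed
  finally show ?thesis .
qed



lemma cond_lem:
  fixes a b lam :: real
  assumes "0 < a" "a \<le> 1/2" "0 \<le> b" "b \<le> 1" "0 \<le> lam" "lam \<le> a"
  shows "(1 - 2 * a - b) * exp lam \<le> 1 - b"
proof (cases "1 - 2 * a - b \<le> 0")
  case True
  then have "(1 - 2 * a - b) * exp lam \<le> 0" by (simp add: mult_nonpos_nonneg)
  then show ?thesis using assms by simp
next
  case False
  have "exp lam \<le> 1 + lam + lam^2" using assms by (intro exp_bound) auto
  also have "\<dots> \<le> 1 + 2 * a"
  proof -
    have "lam * lam \<le> lam * 1" using assms by (intro mult_left_mono) auto
    then show ?thesis using assms by (simp add: power2_eq_square)
  qed
  finally have "(1 - 2 * a - b) * exp lam \<le> (1 - 2 * a - b) * (1 + 2 * a)"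
    using False by (intro mult_left_mono) auto
  also have "\<dots> \<le> 1 - b"
  proof -
    have eq: "(1 - 2 * a - b) * (1 + 2 * a) = 1 - b - (4 * (a * a) + 2 * (a * b))" by (simp add: algebra_simps)
    have "0 \<le> 4 * (a * a) + 2 * (a * b)" using assms by simp
    then show ?thesis unfolding eq by simp
  qed
  finally show ?thesis .
qed

lemma AU:
  assumes a: "0 < a" "a \<le> 1/2" and b: "0 \<le> b" "b \<le> 1" and s: "1 \<le> s"
    and T: "real n = s^4" and d: "d > b * real n + 2 * s^3"
  shows "exp (- (a / s) * d) * (b * exp (a / s) + (1 - b)) ^ n \<le> exp (- (a * s^2))"
proof -
  define lam where "lam = a / s"
  have l0: "0 \<le> lam" "lam \<le> a" using a s by (auto simp: lam_def field_simps)
  have nu: "b * exp lam + (1 - b) \<le> exp (b * (exp lam - 1))"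
    using exp_ge_add_one_self[of "b * (exp lam - 1)"] by (simp add: algebra_simps)
  have nu0: "0 \<le> b * exp lam + (1 - b)" using b by simp
  have "(b * exp lam + (1 - b)) ^ n \<le> exp (b * (exp lam - 1)) ^ n"
    by (rule power_mono[OF nu nu0])
  also have "\<dots> = exp (real n * (b * (exp lam - 1)))" by (simp add: exp_of_nat_mult)
  also have "\<dots> \<le> exp (real n * (b * (lam + lam^2)))"
  proof -
    have "exp lam \<le> 1 + lam + lam^2" using l0 a by (intro exp_bound) auto
    then show ?thesis using b by (auto intro!: mult_left_mono)
  qed
  finally have h: "(b * exp lam + (1 - b)) ^ n \<le> exp (real n * (b * (lam + lam^2)))" .
  have "exp (- lam * d) * (b * exp lam + (1 - b)) ^ n \<le> exp (- lam * d) * exp (real n * (b * (lam + lam^2)))"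
    using h by (intro mult_left_mono) auto
  also have "\<dots> = exp (- lam * d + real n * (b * (lam + lam^2)))" by (rule exp_add[symmetric])
  also have "\<dots> \<le> exp (- (a * s^2))"
  proof -
    have e1: "lam * s^3 = a * s^2" using s by (simp add: lam_def power3_eq_cube power2_eq_square)
    have e2: "lam^2 * s^4 = a^2 * s^2" using s by (simp add: lam_def power2_eq_square field_simps)
      (simp add: power4_eq_xxxx)
    have "- lam * d \<le> - lam * (b * real n + 2 * s^3)" using d l0 by (intro mult_left_mono_neg) auto
    then have "- lam * d + real n * (b * (lam + lam^2)) \<le> - 2 * (lam * s^3) + b * (lam^2 * s^4)"
      unfolding T by (simp add: algebra_simps)
    also have "\<dots> = - 2 * a * s^2 + b * a^2 * s^2" unfolding e1 e2 by simp
    also have "\<dots> \<le> - (a * s^2)"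
    proof -
      have "b * a^2 \<le> a"
      proof -
        have "b * (a * a) \<le> 1 * (a * a)" using a b by (intro mult_right_mono) auto
        moreover have "a * a \<le> a * 1" using a by (intro mult_left_mono) auto
        ultimately show ?thesis by (simp add: power2_eq_square)
      qed
      then have "b * a^2 * s^2 \<le> a * s^2" by (intro mult_right_mono) auto
      then show ?thesis by simp
    qed
    finally show ?thesis by simp
  qed
  finally show ?thesis unfolding lam_def .
qed

lemma AL:
  assumes a: "0 < a" "a \<le> 1/2" and b: "0 \<le> b" "b \<le> 1" and s: "1 \<le> s"
    and T: "real n = s^4" and d: "d \<le> b * real n - 2 * s^3"
  shows "exp ((a / s) * d) * (b * exp (- (a / s)) + (1 - b)) ^ n \<le> exp (- (a * s^2))"
proof -
  define lam where "lam = a / s"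
  have l0: "0 \<le> lam" "lam \<le> a" using a s by (auto simp: lam_def field_simps)
  have mu: "b * exp (- lam) + (1 - b) \<le> exp (b * (exp (- lam) - 1))"
    using exp_ge_add_one_self[of "b * (exp (- lam) - 1)"] by (simp add: algebra_simps)
  have mu0: "0 \<le> b * exp (- lam) + (1 - b)" using b by simp
  have "(b * exp (- lam) + (1 - b)) ^ n \<le> exp (b * (exp (- lam) - 1)) ^ n"
    by (rule power_mono[OF mu mu0])
  also have "\<dots> = exp (real n * (b * (exp (- lam) - 1)))" by (simp add: exp_of_nat_mult)
  also have "\<dots> \<le> exp (real n * (b * (- lam + lam^2)))"
  proof -
    have "exp (- lam) \<le> 1 - lam + lam^2" using l0 by (intro exp_neg_bound) auto
    then show ?thesis using b by (auto intro!: mult_left_mono)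
  qed
  finally have h: "(b * exp (- lam) + (1 - b)) ^ n \<le> exp (real n * (b * (- lam + lam^2)))" .
  have "exp (lam * d) * (b * exp (- lam) + (1 - b)) ^ n \<le> exp (lam * d) * exp (real n * (b * (- lam + lam^2)))"
    using h by (intro mult_left_mono) auto
  also have "\<dots> = exp (lam * d + real n * (b * (- lam + lam^2)))" by (rule exp_add[symmetric])
  also have "\<dots> \<le> exp (- (a * s^2))"
  proof -
    have e1: "lam * s^3 = a * s^2" using s by (simp add: lam_def power3_eq_cube power2_eq_square)
    have e2: "lam^2 * s^4 = a^2 * s^2" using s by (simp add: lam_def power2_eq_square field_simps)
      (simp add: power4_eq_xxxx)
    have "lam * d \<le> lam * (b * real n - 2 * s^3)" using d l0 by (intro mult_left_mono) auto
    then have "lam * d + real n * (b * (- lam + lam^2)) \<le> - 2 * (lam * s^3) + b * (lam^2 * s^4)"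
      unfolding T by (simp add: algebra_simps)
    also have "\<dots> = - 2 * a * s^2 + b * a^2 * s^2" unfolding e1 e2 by simp
    also have "\<dots> \<le> - (a * s^2)"
    proof -
      have "b * a^2 \<le> a"
      proof -
        have "b * (a * a) \<le> 1 * (a * a)" using a b by (intro mult_right_mono) auto
        moreover have "a * a \<le> a * 1" using a by (intro mult_left_mono) auto
        ultimately show ?thesis by (simp add: power2_eq_square)
      qed
      then have "b * a^2 * s^2 \<le> a * s^2" by (intro mult_right_mono) auto
      then show ?thesis by simp
    qed
    finally show ?thesis by simp
  qed
  finally show ?thesis unfolding lam_def .
qed



lemma main_lem:
  assumes a: "0 < a" "a < 1/2" and b: "0 < b" "b < 1"
    and G: "undirected_graph V E \<and> connected_graph V E \<and> locally_finite V E \<and> bfs_tree V E r p \<and> t \<ge> 1"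
  shows "(1 - exp (- (a * real t powr (1/2)))) *
                 (real (gvol V E r \<lfloor>b * real t - 2 * real t powr (3/4)\<rfloor>) / real (gvol V E r (int t)))
                \<le> measure_pmf.expectation (spread V p r a b t) bias
              \<and> measure_pmf.expectation (spread V p r a b t) bias
                \<le> real (gvol V E r \<lfloor>b * real t + 2 * real t powr (3/4)\<rfloor>) / real (gvol V E r (int t))
                   + exp (- (a * real t powr (1/2)))"
proof -
  from G have bfs: "bfs_tree V E r p" and lf: "locally_finite V E" and t1: "t \<ge> 1" by auto
  have ab: "0 \<le> a" "a \<le> 1/2" "0 \<le> b" "b \<le> 1" using a b by auto
  define T where "T = real t"
  define s where "s = T powr (1/4)"
  define eps where "eps = exp (- (a * T powr (1/2)))"
  define lam where "lam = a / s"
  have T1: "1 \<le> T" using t1 by (simp add: T_def)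
  have s1: "1 \<le> s" unfolding s_def using T1 by (rule ge_one_powr_ge_zero) simp
  have s4: "s^4 = T" unfolding s_def using T1 by (simp add: powr_power)
  have s3: "s^3 = T powr (3/4)" unfolding s_def using T1 by (simp add: powr_power)
  have s2: "s^2 = T powr (1/2)" unfolding s_def using T1 by (simp add: powr_power)
  have Tn: "real t = s^4" using s4 T_def by simp
  have lam0: "0 \<le> lam" "lam \<le> a" using a s1 by (auto simp: lam_def field_simps)
  have eps_eq: "eps = exp (- (a * s^2))" unfolding eps_def s2 ..
  define B where "B = gball V E r t"
  have finB: "finite B" unfolding B_def by (rule ball_fin[OF bfs lf])
  have rB: "r \<in> B" unfolding B_def by (rule r_in_ball[OF bfs])
  have N0: "0 < card B" using finB rB card_gt_0_iff by blast
  have gvt: "gvol V E r (int t) = card B" by (simp add: gvol_def B_def)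
  have EB: "measure_pmf.expectation (spread V p r a b t) bias = (\<Sum>v\<in>B. xx V p r a b t v) / real (card B)"
    unfolding B_def by (rule Ebias[OF bfs lf])
  have BV: "B \<subseteq> V" by (auto simp: B_def gball_def)
  have x01: "\<And>v. v \<in> B \<Longrightarrow> 0 \<le> xx V p r a b t v \<and> xx V p r a b t v \<le> 1"
    using L1[OF bfs lf ab, of t] BV by auto
  have sum0: "0 \<le> (\<Sum>v\<in>B. xx V p r a b t v)" using x01 by (intro sum_nonneg) auto
  define D where "D = \<lfloor>b * T + 2 * T powr (3/4)\<rfloor>"
  have D0: "0 \<le> D" unfolding D_def using ab T1 by (auto intro!: add_nonneg_nonneg)
  define B' where "B' = gball V E r (nat D)"
  have finB': "finite B'" unfolding B'_def by (rule ball_fin[OF bfs lf])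
  have gvD: "gvol V E r D = card B'" using D0 by (simp add: gvol_def B'_def)
  have cond: "(1 - 2 * a - b) * exp lam \<le> 1 - b" using cond_lem[OF a(1) ab(2-4) lam0] .
  have up: "xx V p r a b t v \<le> eps" if v: "v \<in> B - B'" for v
  proof -
    have vV: "v \<in> V" using v BV by auto
    have "nat D < gdist E r v" using v vV by (auto simp: B'_def gball_def)
    then have "real_of_int D + 1 \<le> real (gdist E r v)" using D0 by linarith
    moreover have "b * T + 2 * T powr (3/4) < real_of_int D + 1" unfolding D_def by linarith
    ultimately have dgt: "real (gdist E r v) > b * real t + 2 * s^3" unfolding s3 T_def by linarith
    have "xx V p r a b t v \<le> exp (- lam * gdist E r v) * (b * exp lam + (1 - b)) ^ t"
      using L3[OF bfs lf ab lam0(1) cond, of t] vV by auto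
    also have "\<dots> \<le> eps" unfolding eps_eq lam_def using AU[OF a(1) ab(2-4) s1 Tn dgt] by simp
    finally show ?thesis .
  qed
  have "(\<Sum>v\<in>B. xx V p r a b t v) = (\<Sum>v\<in>B \<inter> B'. xx V p r a b t v) + (\<Sum>v\<in>B - B'. xx V p r a b t v)"
    using finB by (rule sum.Int_Diff)
  also have "\<dots> \<le> (\<Sum>v\<in>B \<inter> B'. 1) + (\<Sum>v\<in>B - B'. eps)"
    using x01 up by (intro add_mono sum_mono) auto
  also have "\<dots> = real (card (B \<inter> B')) + real (card (B - B')) * eps" by simp
  also have "\<dots> \<le> real (card B') + real (card B) * eps"
  proof (intro add_mono mult_right_mono)
    show "real (card (B \<inter> B')) \<le> real (card B')" using finB' by (simp add: card_mono)
    show "real (card (B - B')) \<le> real (card B)" using finB by (simp add: card_mono)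
  qed (auto simp: eps_def)
  finally have su: "(\<Sum>v\<in>B. xx V p r a b t v) \<le> real (card B') + real (card B) * eps" .
  have upper: "(\<Sum>v\<in>B. xx V p r a b t v) / real (card B) \<le> real (card B') / real (card B) + eps"
    using su N0 by (simp add: field_simps)
  define D2 where "D2 = \<lfloor>b * T - 2 * T powr (3/4)\<rfloor>"
  have lower: "(1 - eps) * (real (gvol V E r D2) / real (card B)) \<le> (\<Sum>v\<in>B. xx V p r a b t v) / real (card B)"
  proof (cases "D2 < 0")
    case True
    then show ?thesis using sum0 N0 by (simp add: gvol_def)
  next
    case False
    define B'' where "B'' = gball V E r (nat D2)"
    have gvD2: "gvol V E r D2 = card B''" using False by (simp add: gvol_def B''_def)
    have "real_of_int D2 \<le> b * T - 2 * T powr (3/4)" unfolding D2_def by linarith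
    moreover have "0 \<le> T powr (3/4)" by simp
    moreover have "b * T \<le> 1 * T" using ab T1 by (intro mult_right_mono) auto
    ultimately have "real_of_int D2 \<le> T" using powr_ge_zero[of T "3/4"] by linarith
    then have "nat D2 \<le> t" using False T_def by linarith
    then have sub: "B'' \<subseteq> B" unfolding B''_def B_def by (rule ball_mono)
    have lo: "1 - eps \<le> xx V p r a b t v" if v: "v \<in> B''" for v
    proof -
      have vV: "v \<in> V" using v sub BV by auto
      have dle: "gdist E r v \<le> nat D2" using v by (simp add: B''_def gball_def)
      then have dt: "gdist E r v \<le> t" using \<open>nat D2 \<le> t\<close> by simp
      have "real (gdist E r v) \<le> real_of_int D2" using dle False by linarith
      then have dl: "real (gdist E r v) \<le> b * real t - 2 * s^3"
        using \<open>real_of_int D2 \<le> b * T - 2 * T powr (3/4)\<close> unfolding s3 T_def by linarith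
      have "1 - xx V p r a b t v \<le> exp (lam * gdist E r v) * (b * exp (- lam) + (1 - b)) ^ t"
        using L2[OF bfs lf ab lam0(1), of t] vV dt by auto
      also have "\<dots> \<le> eps" unfolding eps_eq lam_def using AL[OF a(1) ab(2-4) s1 Tn dl] by simp
      finally show ?thesis by simp
    qed
    have "(1 - eps) * real (card B'') = (\<Sum>v\<in>B''. 1 - eps)" by simp
    also have "\<dots> \<le> (\<Sum>v\<in>B''. xx V p r a b t v)" using lo by (intro sum_mono) auto
    also have "\<dots> \<le> (\<Sum>v\<in>B. xx V p r a b t v)" using x01 sub finB by (intro sum_mono2) auto
    finally have "(1 - eps) * real (card B'') \<le> (\<Sum>v\<in>B. xx V p r a b t v)" .
    then have "((1 - eps) * real (card B'')) / real (card B) \<le> (\<Sum>v\<in>B. xx V p r a b t v) / real (card B)"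
      by (rule divide_right_mono) simp
    then show ?thesis unfolding gvD2 by simp
  qed
  show ?thesis
    using lower upper unfolding EB gvt gvD[unfolded D_def T_def] D2_def D_def T_def eps_def by simp
qed


theorem mainTheorem12:
  "\<exists>C::real. 0 < C \<and> C < 1 \<and>
     (\<forall>a b :: real. 0 < a \<and> a < 1/2 \<and> 0 < b \<and> b < 1 \<longrightarrow>
       (\<exists>K c1 c2 :: real. K > 0 \<and> c1 > 0 \<and> c2 > 0 \<and>
         (\<forall>V E r p (t::nat).
            undirected_graph V E \<and> connected_graph V E \<and> locally_finite V E \<and>
            bfs_tree V E r p \<and> t \<ge> 1 \<longrightarrow>
              (1 - exp (- (c1 * real t powr c2))) *
                 (real (gvol V E r \<lfloor>b * real t - K * real t powr (1 - C)\<rfloor>) / real (gvol V E r (int t)))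
                \<le> measure_pmf.expectation (spread V p r a b t) bias
              \<and> measure_pmf.expectation (spread V p r a b t) bias
                \<le> real (gvol V E r \<lfloor>b * real t + K * real t powr (1 - C)\<rfloor>) / real (gvol V E r (int t))
                   + exp (- (c1 * real t powr c2)))))"
  proof (rule exI[of _ "1/4::real"], intro conjI allI impI)
  show "0 < (1/4::real)" by simp
  show "(1/4::real) < 1" by simp
  fix a b :: real assume h: "0 < a \<and> a < 1/2 \<and> 0 < b \<and> b < 1"
  have e: "(1 - 1/4::real) = 3/4" by simp
  have e2: "2 * (1::real) = 2" by simp
  show "\<exists>K c1 c2 :: real. K > 0 \<and> c1 > 0 \<and> c2 > 0 \<and>
         (\<forall>V E r p (t::nat).
            undirected_graph V E \<and> connected_graph V E \<and> locally_finite V E \<and>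
            bfs_tree V E r p \<and> t \<ge> 1 \<longrightarrow>
              (1 - exp (- (c1 * real t powr c2))) *
                 (real (gvol V E r \<lfloor>b * real t - K * real t powr (1 - 1/4)\<rfloor>) / real (gvol V E r (int t)))
                \<le> measure_pmf.expectation (spread V p r a b t) bias
              \<and> measure_pmf.expectation (spread V p r a b t) bias
                \<le> real (gvol V E r \<lfloor>b * real t + K * real t powr (1 - 1/4)\<rfloor>) / real (gvol V E r (int t))
                   + exp (- (c1 * real t powr c2)))"
    unfolding e
  proof (rule exI[of _ "2::real"], rule exI[of _ a], rule exI[of _ "1/2::real"], intro conjI allI impI)
    show "(0::real) < 2" by simp
    show "0 < a" using h by simp
    show "(0::real) < 1/2" by simp
    fix V E r p and t :: nat
    assume G: "undirected_graph V E \<and> connected_graph V E \<and> locally_finite V E \<and> bfs_tree V E r p \<and> t \<ge> 1"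
    note M = main_lem[of a b V E r p t, OF _ _ _ _ G]
    show "(1 - exp (- (a * real t powr (1/2)))) *
                 (real (gvol V E r \<lfloor>b * real t - 2 * real t powr (3/4)\<rfloor>) / real (gvol V E r (int t)))
                \<le> measure_pmf.expectation (spread V p r a b t) bias"
      using M h by blast
    show "measure_pmf.expectation (spread V p r a b t) bias
                \<le> real (gvol V E r \<lfloor>b * real t + 2 * real t powr (3/4)\<rfloor>) / real (gvol V E r (int t))
                   + exp (- (a * real t powr (1/2)))"
      using M h by blast
  qed
qed

end
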